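(* Let $\lambda$ be a partition, $i$ an index with $\lambda_i=\lambda_{i+1}$, and $\sigma\in\mathrm{Tab}'(\lambda)$ with $\mathrm{Bot}(\sigma)=w$ satisfying $w_i>w_{i+1}$. Let $\sigma'$ be an outcome of $\widetilde\tau_i(\sigma)$. Then $\mathrm{Bot}(\sigma')=s_i\cdot w$ and \[ \mathrm{wt}_{HHL}(\sigma')\,\mathrm{prob}_i(\sigma',\sigma)=t\,\mathrm{wt}_{HHL}(\sigma)\,\mathrm{prob}_i(\sigma,\sigma'). \]
   Context: Let $\lambda=(\lambda_1\ge\dots\ge\lambda_k>0)$, $\mathrm{dg}(\lambda)$ the set of cells $(r,c)$, $1\le c\le k$, $1\le r\le\lambda_c$ (rows bottom to top), $\lambda'_r=\#\{c:\lambda_c\ge r\}$, $n(\lambda)=\sum_r\binom{\lambda'_r}{2}$, $\mathrm{leg}(r,c)=\lambda_c-r$, $\mathrm{arm}(r,c)=\lambda'_r-c$. $\mathcal{Q}(a,b,c)=0$ if $a\le b<c$ or $c<a\le b$ or $b<c<a$, and $1$ otherwise (for $a,b,c\in\mathbb{Z}_{\ge0}\cup\{\infty\}$). $\mathrm{Tab}'(\lambda)$ is the set of inv-non-attacking fillings $\sigma:\mathrm{dg}(\lambda)\to\mathbb{Z}_{>0}$: no two distinct cells in the same row have equal entries and no cells $(r,i),(r+1,j)$ with $i<j$ have equal entries. $\mathrm{Bot}(\sigma)=(\sigma(1,1),\dots,\sigma(1,k))$; $s_i\cdot w$ swaps letters $i,i+1$ of $w$. Statistics: $x^\sigma=\prod_u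 x_{\sigma(u)}$; $\mathrm{maj}(\sigma)=\sum_{u=(r,c),\,r\ge2,\,\sigma(r,c)>\sigma(r-1,c)}(\mathrm{leg}(u)+1)$; for each row $r$ and columns $i<j$ with $(r,i),(r,j)\in\mathrm{dg}(\lambda)$ form $(a,b,c)$ with $a=\sigma(r,i)$, $b=\sigma(r-1,i)$ if $r\ge2$ and $b=\infty$ if $r=1$, $c=\sigma(r,j)$; $\mathrm{inv}(\sigma)$ counts triples with $\mathcal{Q}(a,b,c)=0$, $\mathrm{coinv}=n(\lambda)-\mathrm{inv}$. $\mathrm{wt}_{HHL}(\sigma)=x^\sigma q^{\mathrm{maj}(\sigma)}t^{\mathrm{coinv}(\sigma)}\prod_{u=(r,c),\,r\ge2,\,\sigma(r,c)\ne\sigma(r-1,c)}\frac{1-t}{1-q^{\mathrm{leg}(u)+1}t^{\mathrm{arm}(u)+1}}$. Operators: for $i$ with $\lambda_i=\lambda_{i+1}=L$ and $1\le r\le L$, $\mathfrak{t}_i^{(r)}$ swaps the entries of $(r,i)$ and $(r,i+1)$. $\widetilde\tau_i^{(r)}$ sends $\sigma$ to a finite set of outcomes with transition weights, recursively upward, with $a=\sigma(r,i)$, $b=\sigma(r,i+1)$ and for $r<L$, $c=\sigma(r+1,i)$, $d=\sigma(r+1,i+1)$: (i) $r=L$: outcome $\mathfrak{t}_i^{(L)}\sigma$, weight $1$; (ii) $r<L$ and ($b=c$, or $\{a,b\}\cap\{c,d\}=\emptyset$ and $\mathcal{Q}(c,a,d)=\mathcal{Q}(c,b,d)$): outcome $\mathfrak{t}_i^{(r)}\sigma$,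 weight $1$; (iii) $r<L$ and ($b=d$, or $\{a,b\}\cap\{c,d\}=\emptyset$ and $\mathcal{Q}(c,a,d)\ne\mathcal{Q}(c,b,d)$): the outcomes of $\widetilde\tau_i^{(r+1)}(\mathfrak{t}_i^{(r)}\sigma)$, weights multiplied by $1$; (iv) $r<L$, $a=c$, $b\ne d$: with $\ell'=L-r$ and $A'=\mathrm{arm}(r+1,i+1)+1$, outcome $\mathfrak{t}_i^{(r)}\sigma$ with weight $(q^{\ell'}t^{A'})^{\mathcal{Q}(a,b,d)}\frac{1-t}{1-q^{\ell'}t^{A'+1}}$, and the outcomes of $\widetilde\tau_i^{(r+1)}(\mathfrak{t}_i^{(r)}\sigma)$ with weights multiplied by $t^{1-\mathcal{Q}(a,b,d)}\frac{1-q^{\ell'}t^{A'}}{1-q^{\ell'}t^{A'+1}}$. $\widetilde\tau_i(\sigma)=\widetilde\tau_i^{(1)}(\sigma)$; $\mathrm{prob}_i(\sigma,\sigma')$ is the product of transition weights along the recursion producing the outcome $\sigma'$, and $0$ if $\sigma'$ is not an outcome of $\widetilde\tau_i(\sigma)$. *)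

theory Defs
  imports Main "HOL-Library.Extended_Nat"
begin

(* A partition lambda = (lambda_1 >= ... >= lambda_k > 0) is a list; lambda_c = lam ! (c - 1).
   Cells are pairs (r, c) (row, column), 1-indexed, rows from bottom to top.
   A filling is a function nat * nat => nat; it is normalised to 0 outside the diagram. *)

type_synonym filling = "nat \<times> nat \<Rightarrow> nat"

definition is_partition :: "nat list \<Rightarrow> bool" where
  "is_partition lam \<longleftrightarrow> sorted_wrt (\<ge>) lam \<and> (\<forall>x\<in>set lam. x > 0)"

definition colh :: "nat list \<Rightarrow> nat \<Rightarrow> nat" where
  "colh lam c = lam ! (c - 1)"

definition dg :: "nat list \<Rightarrow> (nat \<times> nat) set" where
  "dg lam = {(r, c). 1 \<le> c \<and> c \<le> length lam \<and> 1 \<le> r \<and> r \<le> colh lam c}"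

definition rowlen :: "nat list \<Rightarrow> nat \<Rightarrow> nat" where
  "rowlen lam r = card {c. 1 \<le> c \<and> c \<le> length lam \<and> colh lam c \<ge> r}"

definition nlam :: "nat list \<Rightarrow> nat" where
  "nlam lam = (\<Sum>r\<in>{1..sum_list lam}. rowlen lam r choose 2)"

definition leg :: "nat list \<Rightarrow> nat \<times> nat \<Rightarrow> nat" where
  "leg lam u = colh lam (snd u) - fst u"

definition arm :: "nat list \<Rightarrow> nat \<times> nat \<Rightarrow> nat" where
  "arm lam u = rowlen lam (fst u) - snd u"

definition Qf :: "enat \<Rightarrow> enat \<Rightarrow> enat \<Rightarrow> nat" where
  "Qf a b c = (if (a \<le> b \<and> b < c) \<or> (c < a \<and> a \<le> b) \<or> (b < c \<and> c < a) then 0 else 1)"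

definition Tab' :: "nat list \<Rightarrow> filling set" where
  "Tab' lam = {\<sigma>. (\<forall>u\<in>dg lam. \<sigma> u > 0) \<and> (\<forall>u. u \<notin> dg lam \<longrightarrow> \<sigma> u = 0)
     \<and> (\<forall>r i j. (r, i) \<in> dg lam \<and> (r, j) \<in> dg lam \<and> i \<noteq> j \<longrightarrow> \<sigma> (r, i) \<noteq> \<sigma> (r, j))
     \<and> (\<forall>r i j. (r, i) \<in> dg lam \<and> (r + 1, j) \<in> dg lam \<and> i < j \<longrightarrow> \<sigma> (r, i) \<noteq> \<sigma> (r + 1, j))}"

definition Bot :: "nat list \<Rightarrow> filling \<Rightarrow> nat list" where
  "Bot lam \<sigma> = map (\<lambda>c. \<sigma> (1, c)) [1..<length lam + 1]"

(* s_i . w : swap letters i and i+1 (1-indexed) *)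
definition sact :: "nat \<Rightarrow> nat list \<Rightarrow> nat list" where
  "sact i w = w[i - 1 := w ! i, i := w ! (i - 1)]"

definition maj :: "nat list \<Rightarrow> filling \<Rightarrow> nat" where
  "maj lam \<sigma> = (\<Sum>u\<in>{u\<in>dg lam. fst u \<ge> 2 \<and> \<sigma> u > \<sigma> (fst u - 1, snd u)}. leg lam u + 1)"

definition below :: "filling \<Rightarrow> nat \<Rightarrow> nat \<Rightarrow> enat" where
  "below \<sigma> r i = (if r \<ge> 2 then enat (\<sigma> (r - 1, i)) else \<infinity>)"

definition inv :: "nat list \<Rightarrow> filling \<Rightarrow> nat" where
  "inv lam \<sigma> = card {(r, i, j). (r, i) \<in> dg lam \<and> (r, j) \<in> dg lam \<and> i < j \<and>
       Qf (enat (\<sigma> (r, i))) (below \<sigma> r i) (enat (\<sigma> (r, j))) = 0}"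

definition coinv :: "nat list \<Rightarrow> filling \<Rightarrow> nat" where
  "coinv lam \<sigma> = nlam lam - inv lam \<sigma>"

definition wtHHL :: "nat list \<Rightarrow> (nat \<Rightarrow> 'a::field) \<Rightarrow> 'a \<Rightarrow> 'a \<Rightarrow> filling \<Rightarrow> 'a" where
  "wtHHL lam x q t \<sigma> =
     (\<Prod>u\<in>dg lam. x (\<sigma> u)) * q ^ maj lam \<sigma> * t ^ coinv lam \<sigma> *
     (\<Prod>u\<in>{u\<in>dg lam. fst u \<ge> 2 \<and> \<sigma> u \<noteq> \<sigma> (fst u - 1, snd u)}.
        (1 - t) / (1 - q ^ (leg lam u + 1) * t ^ (arm lam u + 1)))"

definition tswap :: "nat \<Rightarrow> nat \<Rightarrow> filling \<Rightarrow> filling" where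
  "tswap i r \<sigma> = \<sigma>((r, i) := \<sigma> (r, i + 1), (r, i + 1) := \<sigma> (r, i))"

(* tauR lam q t i n r \<sigma> = list of (outcome, weight) of \<tau>~_i^{(r)}(\<sigma>), where n = L - r
   counts the remaining rows above r (L = lambda_i = lambda_{i+1}). *)
primrec tauR :: "nat list \<Rightarrow> 'a::field \<Rightarrow> 'a \<Rightarrow> nat \<Rightarrow> nat \<Rightarrow> nat \<Rightarrow> filling \<Rightarrow> (filling \<times> 'a) list" where
  "tauR lam q t i 0 r \<sigma> = [(tswap i r \<sigma>, 1)]"
| "tauR lam q t i (Suc n) r \<sigma> =
     (let a = \<sigma> (r, i); b = \<sigma> (r, i + 1); c = \<sigma> (r + 1, i); d = \<sigma> (r + 1, i + 1);
          disj = ({a, b} \<inter> {c, d} = {});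
          Qa = Qf (enat c) (enat a) (enat d); Qb = Qf (enat c) (enat b) (enat d);
          \<sigma>1 = tswap i r \<sigma>
      in if b = c \<or> (disj \<and> Qa = Qb) then [(\<sigma>1, 1)]
         else if b = d \<or> (disj \<and> Qa \<noteq> Qb) then tauR lam q t i n (r + 1) \<sigma>1
         else if a = c then
           (let l' = Suc n; A' = arm lam (r + 1, i + 1) + 1; Qv = Qf (enat a) (enat b) (enat d)
            in (\<sigma>1, (q ^ l' * t ^ A') ^ Qv * ((1 - t) / (1 - q ^ l' * t ^ (A' + 1))))
               # map (\<lambda>p. (fst p, t ^ (1 - Qv) * ((1 - q ^ l' * t ^ A') / (1 - q ^ l' * t ^ (A' + 1))) * snd p))
                   (tauR lam q t i n (r + 1) \<sigma>1))
         else [])"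

definition tau :: "nat list \<Rightarrow> 'a::field \<Rightarrow> 'a \<Rightarrow> nat \<Rightarrow> filling \<Rightarrow> (filling \<times> 'a) list" where
  "tau lam q t i \<sigma> = tauR lam q t i (colh lam i - 1) 1 \<sigma>"

definition outcomes :: "nat list \<Rightarrow> 'a::field \<Rightarrow> 'a \<Rightarrow> nat \<Rightarrow> filling \<Rightarrow> filling set" where
  "outcomes lam q t i \<sigma> = fst ` set (tau lam q t i \<sigma>)"

definition prob :: "nat list \<Rightarrow> 'a::field \<Rightarrow> 'a \<Rightarrow> nat \<Rightarrow> filling \<Rightarrow> filling \<Rightarrow> 'a" where
  "prob lam q t i \<sigma> \<sigma>' = sum_list (map snd (filter (\<lambda>p. fst p = \<sigma>') (tau lam q t i \<sigma>)))"

end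

theory Submission
  imports Defs
begin


definition Qn :: "nat \<Rightarrow> nat \<Rightarrow> nat \<Rightarrow> nat" where
 "Qn a b c = (if (a \<le> b \<and> b < c) \<or> (c < a \<and> a \<le> b) \<or> (b < c \<and> c < a) then 0 else 1)"

lemma Qf_enat[simp]: "Qf (enat a) (enat b) (enat c) = Qn a b c"
  by (simp add: Qf_def Qn_def)

definition kind :: "nat \<Rightarrow> nat \<Rightarrow> nat \<Rightarrow> nat \<Rightarrow> nat" where
 "kind a b c d = (if b = c \<or> ({a,b} \<inter> {c,d} = {} \<and> Qn c a d = Qn c b d) then 0
   else if b = d \<or> ({a,b} \<inter> {c,d} = {} \<and> Qn c a d \<noteq> Qn c b d) then 1
   else if a = c then 2 else 3)"

definition Fc :: "'a::field \<Rightarrow> 'a \<Rightarrow> nat \<Rightarrow> nat \<Rightarrow> 'a" where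
  "Fc q t l A = (1 - t) / (1 - q^l * t^A)"

definition Gc :: "'a::field \<Rightarrow> 'a \<Rightarrow> nat \<Rightarrow> nat \<Rightarrow> 'a" where
  "Gc q t l A = (1 - q^l * t^A) / (1 - q^l * t^(A+1))"

definition stopw :: "'a::field \<Rightarrow> 'a \<Rightarrow> nat \<Rightarrow> nat \<Rightarrow> nat \<Rightarrow> nat \<Rightarrow> nat \<Rightarrow> nat \<Rightarrow> 'a" where
 "stopw q t l A a b c d = (if kind a b c d = 0 then 1 else if kind a b c d = 2 then
     (q^l*t^A)^(Qn a b d) * Fc q t l (A+1) else 0)"

definition contw :: "'a::field \<Rightarrow> 'a \<Rightarrow> nat \<Rightarrow> nat \<Rightarrow> nat \<Rightarrow> nat \<Rightarrow> nat \<Rightarrow> nat \<Rightarrow> 'a" where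
 "contw q t l A a b c d = (if kind a b c d = 1 then 1 else if kind a b c d = 2 then
     t^(1 - Qn a b d) * Gc q t l A else 0)"

definition swp :: "nat \<Rightarrow> nat \<Rightarrow> nat \<Rightarrow> filling \<Rightarrow> filling" where
 "swp i r k \<rho> = (\<lambda>u. if r \<le> fst u \<and> fst u \<le> k \<and> snd u = i then \<rho> (fst u, i+1)
     else if r \<le> fst u \<and> fst u \<le> k \<and> snd u = i+1 then \<rho> (fst u, i) else \<rho> u)"

primrec Wd :: "nat list \<Rightarrow> 'a::field \<Rightarrow> 'a \<Rightarrow> nat \<Rightarrow> nat \<Rightarrow> nat \<Rightarrow> filling \<Rightarrow> nat \<Rightarrow> 'a" where
  "Wd lam q t i 0 r \<rho> k = (if k = r then 1 else 0)"
| "Wd lam q t i (Suc n) r \<rho> k = (if k = r then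
      stopw q t (Suc n) (arm lam (r+1,i+1)+1) (\<rho>(r,i)) (\<rho>(r,i+1)) (\<rho>(r+1,i)) (\<rho>(r+1,i+1))
    else contw q t (Suc n) (arm lam (r+1,i+1)+1) (\<rho>(r,i)) (\<rho>(r,i+1)) (\<rho>(r+1,i)) (\<rho>(r+1,i+1))
       * Wd lam q t i n (r+1) \<rho> k)"

primrec Vd :: "nat \<Rightarrow> nat \<Rightarrow> nat \<Rightarrow> filling \<Rightarrow> nat \<Rightarrow> bool" where
  "Vd i 0 r \<rho> k = (k = r)"
| "Vd i (Suc n) r \<rho> k = (if k = r then kind (\<rho>(r,i)) (\<rho>(r,i+1)) (\<rho>(r+1,i)) (\<rho>(r+1,i+1)) \<in> {0,2}
     else kind (\<rho>(r,i)) (\<rho>(r,i+1)) (\<rho>(r+1,i)) (\<rho>(r+1,i+1)) \<in> {1,2} \<and> Vd i n (r+1) \<rho> k)"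

lemma tauR_Suc: "tauR lam q t i (Suc n) r \<rho> =
  (let a = \<rho> (r, i); b = \<rho> (r, i + 1); c = \<rho> (r + 1, i); d = \<rho> (r + 1, i + 1);
       A = arm lam (r + 1, i + 1) + 1; \<sigma>1 = tswap i r \<rho> in
   if kind a b c d = 0 then [(\<sigma>1, 1)]
   else if kind a b c d = 1 then tauR lam q t i n (r + 1) \<sigma>1
   else if kind a b c d = 2 then
     (\<sigma>1, (q ^ Suc n * t ^ A) ^ Qn a b d * ((1 - t) / (1 - q ^ Suc n * t ^ (A + 1))))
       # map (\<lambda>p. (fst p, t ^ (1 - Qn a b d) * ((1 - q ^ Suc n * t ^ A) / (1 - q ^ Suc n * t ^ (A + 1))) * snd p))
           (tauR lam q t i n (r + 1) \<sigma>1)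
   else [])"
  by (auto simp add: Let_def kind_def)

declare tauR.simps(2)[simp del]

lemma tswap_swp: "tswap i r \<rho> = swp i r r \<rho>"
  by (auto simp: tswap_def swp_def fun_eq_iff)

lemma swp_tswap: "1 \<le> i \<Longrightarrow> r \<le> k \<Longrightarrow> swp i (r+1) k (tswap i r \<rho>) = swp i r k \<rho>"
  unfolding tswap_def swp_def fun_eq_iff
  apply (intro allI)
  subgoal for u by (cases u; cases "fst u = r") auto
  done

lemma swp_inj: assumes "\<rho> (max k k', i) \<noteq> \<rho> (max k k', i+1)" "r \<le> k" "r \<le> k'"
  and "swp i r k \<rho> = swp i r k' \<rho>" shows "k = k'"
proof (rule ccontr)
  assume ne: "k \<noteq> k'"
  have "swp i r k \<rho> (max k k', i) = swp i r k' \<rho> (max k k', i)" using assms(4) by simp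
  then show False using ne assms(1-3) by (auto simp: swp_def max_def split: if_splits)
qed

lemma set_tauR: "p \<in> set (tauR lam q t i n r \<rho>) \<Longrightarrow> 1 \<le> i \<Longrightarrow>
   \<exists>k. r \<le> k \<and> k \<le> r + n \<and> fst p = swp i r k \<rho> \<and> Vd i n r \<rho> k"
proof (induction n arbitrary: r \<rho> p)
  case 0
  then show ?case by (auto simp: tswap_swp)
next
  case (Suc n)
  let ?a = "\<rho> (r, i)" and ?b = "\<rho> (r, i + 1)" and ?c = "\<rho> (r + 1, i)" and ?d = "\<rho> (r + 1, i + 1)"
  have agree: "Vd i n (r+1) (tswap i r \<rho>) k = Vd i n (r+1) \<rho> k" for k
  proof -
    have "\<And>m r'. r' \<ge> r + 1 \<Longrightarrow> Vd i m r' (tswap i r \<rho>) k = Vd i m r' \<rho> k"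
    proof -
      fix m r' show "r' \<ge> r + 1 \<Longrightarrow> Vd i m r' (tswap i r \<rho>) k = Vd i m r' \<rho> k"
        by (induction m arbitrary: r') (auto simp: tswap_def)
    qed
    then show ?thesis by simp
  qed
  consider "kind ?a ?b ?c ?d = 0" | "kind ?a ?b ?c ?d = 1" | "kind ?a ?b ?c ?d = 2" | "kind ?a ?b ?c ?d = 3"
  proof -
    have "kind ?a ?b ?c ?d \<in> {0,1,2,3}" unfolding kind_def by auto
    then show ?thesis using that by blast
  qed
  then show ?case
  proof cases
    case 1 then show ?thesis using Suc.prems by (auto simp: tauR_Suc Let_def tswap_swp)
  next
    case 2
    with Suc.prems have "p \<in> set (tauR lam q t i n (r+1) (tswap i r \<rho>))" by (simp add: tauR_Suc Let_def)
    from Suc.IH[OF this Suc.prems(2)] obtain k where k: "r+1 \<le> k" "k \<le> r+1+n"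
      "fst p = swp i (r+1) k (tswap i r \<rho>)" "Vd i n (r+1) (tswap i r \<rho>) k" by blast
    show ?thesis using k 2 agree[of k] swp_tswap[OF Suc.prems(2), of r k \<rho>]
      by (intro exI[of _ k]) auto
  next
    case 3
    with Suc.prems have "fst p = tswap i r \<rho> \<or> (\<exists>p'\<in>set (tauR lam q t i n (r+1) (tswap i r \<rho>)). fst p = fst p')"
      using Suc.prems by (simp add: tauR_Suc Let_def) force
    then show ?thesis
    proof
      assume "fst p = tswap i r \<rho>" then show ?thesis using 3 by (auto simp: tswap_swp)
    next
      assume "\<exists>p'\<in>set (tauR lam q t i n (r+1) (tswap i r \<rho>)). fst p = fst p'"
      then obtain p' where p': "p' \<in> set (tauR lam q t i n (r+1) (tswap i r \<rho>))" "fst p = fst p'" by blast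
      from Suc.IH[OF p'(1) Suc.prems(2)] obtain k where k: "r+1 \<le> k" "k \<le> r+1+n"
        "fst p' = swp i (r+1) k (tswap i r \<rho>)" "Vd i n (r+1) (tswap i r \<rho>) k" by blast
      show ?thesis using k 3 p'(2) agree[of k] swp_tswap[OF Suc.prems(2), of r k \<rho>]
        by (intro exI[of _ k]) auto
    qed
  next
    case 4 then show ?thesis using Suc.prems by (auto simp: tauR_Suc Let_def)
  qed
qed

lemma Wd_tswap: "r' \<ge> r + 1 \<Longrightarrow> Wd lam q t i m r' (tswap i r \<rho>) k = Wd lam q t i m r' \<rho> k"
  by (induction m arbitrary: r') (auto simp: tswap_def)

lemma tauR_filter:
  assumes "1 \<le> i" "r \<le> k" "k \<le> r + n"
    "\<forall>s. r \<le> s \<and> s \<le> r + n \<longrightarrow> \<rho> (s,i) \<noteq> \<rho> (s,i+1)"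
  shows "sum_list (map snd (filter (\<lambda>p. fst p = swp i r k \<rho>) (tauR lam q t i n r \<rho>))) = Wd lam q t i n r \<rho> k"
  using assms(2-4)
proof (induction n arbitrary: r \<rho> k)
  case 0
  then show ?case by (auto simp: tswap_swp)
next
  case (Suc n)
  let ?a = "\<rho> (r, i)" and ?b = "\<rho> (r, i + 1)" and ?c = "\<rho> (r + 1, i)" and ?d = "\<rho> (r + 1, i + 1)"
  let ?T = "tauR lam q t i n (r+1) (tswap i r \<rho>)"
  have nomatch: "filter (\<lambda>p. fst p = swp i r r \<rho>) ?T = []"
  proof -
    { fix p assume p: "p \<in> set ?T" "fst p = swp i r r \<rho>"
      from set_tauR[OF p(1) assms(1)] obtain k' where k': "r+1 \<le> k'" "k' \<le> r + 1 + n"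
        "fst p = swp i (r+1) k' (tswap i r \<rho>)" by blast
      hence "swp i r k' \<rho> = swp i r r \<rho>" using p(2) swp_tswap[OF assms(1), of r k' \<rho>] by simp
      moreover have "\<rho> (max k' r, i) \<noteq> \<rho> (max k' r, i+1)" using Suc.prems(3) k' by (auto simp: max_def)
      moreover have "r \<le> k'" using k' by simp
      ultimately have "k' = r" using swp_inj[of \<rho> k' r i r] by blast
      with k' have False by simp }
    then show ?thesis by (auto simp: filter_empty_conv)
  qed
  have hd_ne: "k \<noteq> r \<Longrightarrow> tswap i r \<rho> \<noteq> swp i r k \<rho>"
  proof
    assume "k \<noteq> r" "tswap i r \<rho> = swp i r k \<rho>"
    moreover have "\<rho> (max r k, i) \<noteq> \<rho> (max r k, i+1)" using Suc.prems by (auto simp: max_def)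
    ultimately show False using swp_inj[of \<rho> r k i r] Suc.prems by (auto simp: tswap_swp)
  qed
  have IH: "k \<noteq> r \<Longrightarrow> sum_list (map snd (filter (\<lambda>p. fst p = swp i r k \<rho>) ?T)) = Wd lam q t i n (r+1) \<rho> k"
  proof -
    assume "k \<noteq> r"
    hence "r + 1 \<le> k" using Suc.prems by simp
    moreover have "\<forall>s. r + 1 \<le> s \<and> s \<le> r + 1 + n \<longrightarrow> tswap i r \<rho> (s,i) \<noteq> tswap i r \<rho> (s,i+1)"
      using Suc.prems(3) by (auto simp: tswap_def)
    ultimately have "sum_list (map snd (filter (\<lambda>p. fst p = swp i (r+1) k (tswap i r \<rho>)) ?T)) = Wd lam q t i n (r+1) (tswap i r \<rho>) k"
      using Suc.IH[of "r+1" k "tswap i r \<rho>"] Suc.prems by simp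
    then show ?thesis using swp_tswap[OF assms(1), of r k \<rho>] \<open>r + 1 \<le> k\<close> by (simp add: Wd_tswap)
  qed
  have "kind ?a ?b ?c ?d \<in> {0,1,2,3}" unfolding kind_def by auto
  then consider "kind ?a ?b ?c ?d = 0" | "kind ?a ?b ?c ?d = 1" | "kind ?a ?b ?c ?d = 2" | "kind ?a ?b ?c ?d = 3" by auto
  then show ?case
  proof cases
    case 1 then show ?thesis using hd_ne by (auto simp: tauR_Suc Let_def tswap_swp stopw_def contw_def)
  next
    case 2 then show ?thesis using IH nomatch by (auto simp: tauR_Suc Let_def tswap_swp stopw_def contw_def)
  next
    case 3
    define A where "A = arm lam (r + 1, i + 1) + 1"
    define \<alpha> where "\<alpha> = stopw q t (Suc n) A ?a ?b ?c ?d"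
    define \<beta> where "\<beta> = contw q t (Suc n) A ?a ?b ?c ?d"
    have T: "tauR lam q t i (Suc n) r \<rho> = (tswap i r \<rho>, \<alpha>) # map (\<lambda>p. (fst p, \<beta> * snd p)) ?T"
      using 3 by (simp add: tauR_Suc Let_def stopw_def contw_def Fc_def Gc_def \<alpha>_def \<beta>_def A_def)
    have F: "filter (\<lambda>p. fst p = X) (map (\<lambda>p. (fst p, \<beta> * snd p)) ?T)
        = map (\<lambda>p. (fst p, \<beta> * snd p)) (filter (\<lambda>p. fst p = X) ?T)" for X
      by (simp add: filter_map o_def)
    have S: "sum_list (map (\<lambda>p. \<beta> * snd p) xs) = \<beta> * sum_list (map snd xs)" for xs :: "(filling \<times> 'a) list"
      by (induction xs) (auto simp: algebra_simps)
    have W: "Wd lam q t i (Suc n) r \<rho> k = (if k = r then \<alpha> else \<beta> * Wd lam q t i n (r+1) \<rho> k)"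
      by (simp add: \<alpha>_def \<beta>_def A_def)
    show ?thesis
    proof (cases "k = r")
      case True
      have nomatch': "filter (\<lambda>p. fst p = tswap i r \<rho>) ?T = []" using nomatch by (simp only: tswap_swp)
      have "swp i r k \<rho> = tswap i r \<rho>" using True by (simp add: tswap_swp)
      then show ?thesis unfolding T W using nomatch' True by (simp add: F[simplified] S o_def)
    next
      case False
      then show ?thesis unfolding T W using IH hd_ne by (simp add: F[simplified] S o_def)
    qed
  next
    case 4 then show ?thesis by (auto simp: tauR_Suc Let_def stopw_def contw_def)
  qed
qed

lemma Qn_le1: "Qn a b c \<le> 1" by (simp add: Qn_def)
lemma Qn_same: "x \<noteq> y \<Longrightarrow> Qn x x y = 0" by (auto simp: Qn_def)
lemma Qn_rev: "x \<noteq> y \<Longrightarrow> y \<noteq> z \<Longrightarrow> x \<noteq> z \<Longrightarrow> Qn z y x = 1 - Qn x y z"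
  by (auto simp: Qn_def)


definition cellw :: "(nat \<Rightarrow> 'a::field) \<Rightarrow> 'a \<Rightarrow> 'a \<Rightarrow> nat \<Rightarrow> nat \<Rightarrow> nat \<Rightarrow> nat \<Rightarrow> 'a" where
  "cellw x q t l A v w = x v * q ^ (if v > w then l else 0) * (if v \<noteq> w then Fc q t l A else 1)"

lemma cellw_eq: "cellw x q t l A v v = x v" by (simp add: cellw_def)
lemma cellw_ne: "v \<noteq> w \<Longrightarrow> cellw x q t l A v w = x v * q ^ (if v > w then l else 0) * Fc q t l A"
  by (simp add: cellw_def)

lemma FcG: assumes gen: "\<forall>a b. a > 0 \<longrightarrow> q ^ a * t ^ b \<noteq> (1::'a::field)" and "l > 0"
  shows "Fc q t l A * Gc q t l A = Fc q t l (A+1)"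
proof -
  have "1 - q^l*t^A \<noteq> 0" using gen assms(2) by (metis right_minus_eq)
  moreover have "u \<noteq> 0 \<Longrightarrow> (z::'a)/u * (u/v) = z/v" for z u v by (cases "v = 0") (simp_all add: field_simps)
  ultimately show ?thesis unfolding Fc_def Gc_def by simp
qed

lemma cont_local:
  fixes q t :: "'a::field"
  assumes gen: "\<forall>a b. a > 0 \<longrightarrow> q ^ a * t ^ b \<noteq> 1" and l: "l > 0"
    and k: "kind a b c d \<in> {1,2}" and ab: "a \<noteq> b" and cd: "c \<noteq> d" and ad: "a \<noteq> d"
  shows "cellw x q t l (A+1) d b * cellw x q t l A c a * t^(Qn d b c) * contw q t l A b a d c
       = cellw x q t l (A+1) c a * cellw x q t l A d b * t^(Qn c a d) * contw q t l A a b c d"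
    (is "?L = ?R")
proof -
  note G = FcG[OF gen l]
  consider (K1a) "kind a b c d = 1" "b = d" "a = c" | (K1b) "kind a b c d = 1" "b = d" "a \<noteq> c"
    | (K1c) "kind a b c d = 1" "b \<noteq> d" | (K2) "kind a b c d = 2" using k by auto
  then show ?thesis
  proof cases
    case K1a
    have "kind b a d c = 1" using K1a ab by (auto simp: kind_def)
    then show ?thesis using K1a ab by (simp add: contw_def cellw_eq Qn_same)
  next
    case K1b
    have bc: "b \<noteq> c" using K1b cd by auto
    have kk: "kind b a d c = 2" using K1b ab bc by (auto simp: kind_def)
    have Q: "1 - Qn d a c = Qn c a d" using Qn_rev[of c a d] Qn_le1[of c a d] K1b ab bc by auto
    have "?L = (x c * x d * q^(if c > a then l else 0) * t^(Qn c a b)) * (Fc q t l A * Gc q t l A)"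
      using K1b kk bc ab by (simp add: contw_def cellw_eq cellw_ne Qn_same Q Q[simplified] mult_ac)
    also have "\<dots> = ?R" using K1b kk bc ab by (simp add: G contw_def cellw_eq cellw_ne mult_ac)
    finally show ?thesis .
  next
    case K1c
    have h: "b \<noteq> c" "{a,b} \<inter> {c,d} = {}" "Qn c a d \<noteq> Qn c b d" using K1c by (auto simp: kind_def split: if_splits)
    have Qs: "Qn d b c = 1 - Qn c b d" "Qn d a c = 1 - Qn c a d" using Qn_rev[of c b d] Qn_rev[of c a d] h cd by auto
    have kk: "kind b a d c = 1" using h Qs Qn_le1[of c a d] Qn_le1[of c b d] unfolding kind_def by auto
    have Q: "Qn d b c = Qn c a d" using Qs h Qn_le1[of c a d] Qn_le1[of c b d] by auto
    show ?thesis using K1c kk h by (simp add: contw_def cellw_ne Q mult_ac)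
  next
    case K2
    have h: "a = c" "b \<noteq> c" "b \<noteq> d" using K2 by (auto simp: kind_def split: if_splits)
    have kk: "kind b a d c = 1" using h cd unfolding kind_def by auto
    have Q: "Qn d b c = 1 - Qn c b d" using Qn_rev[of c b d] Qn_rev[of c a d] h cd by auto
    have "?L = (x c * x d * q^(if d > b then l else 0) * t^(1 - Qn c b d)) * Fc q t l (A+1)"
      using K2 kk h cd by (simp add: contw_def cellw_eq cellw_ne Qn_same Q Q[simplified] mult_ac)
    also have "\<dots> = (x c * x d * q^(if d > b then l else 0) * t^(1 - Qn c b d)) * (Fc q t l A * Gc q t l A)"
      by (simp add: G)
    also have "\<dots> = ?R" using K2 kk h cd by (simp add: contw_def cellw_eq cellw_ne Qn_same mult_ac)
    finally show ?thesis .
  qed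
qed



lemma eqq1: "a\<noteq>c \<Longrightarrow> a\<noteq>d \<Longrightarrow> c\<noteq>d \<Longrightarrow> (if d > a then l else 0) + l * Qn c a d = (if c > a then l else 0) + (if d > c then l else (0::nat))"
  by (cases "a<c"; cases "a<d"; cases "c<d") (auto simp: Qn_def)
lemma eqq3: "b\<noteq>c \<Longrightarrow> b\<noteq>d \<Longrightarrow> c\<noteq>d \<Longrightarrow> (if c > b then l else 0) + (if d > c then l else 0) = (if d > b then l else 0) + l * Qn c b d"
  by (cases "b<c"; cases "b<d"; cases "c<d") (auto simp: Qn_def)
lemma eqq2: "a\<noteq>c \<Longrightarrow> a\<noteq>d \<Longrightarrow> b\<noteq>c \<Longrightarrow> b \<noteq> d \<Longrightarrow> c\<noteq>d \<Longrightarrow> Qn c a d = Qn c b d \<Longrightarrow>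
   (if c > b then l else 0) + (if d > a then l else 0) = (if c > a then l else (0::nat)) + (if d > b then l else 0)"
  by (cases "a<c"; cases "a<d"; cases "c<d"; cases "b<c"; cases "b<d") (auto simp: Qn_def)

lemma stop_local:
  fixes q t :: "'a::field"
  assumes k: "kind a b c d \<in> {0,2}" and ab: "a \<noteq> b" and cd: "c \<noteq> d" and ad: "a \<noteq> d"
    and S: "S' + n * Qn c a d = S + n * Qn c b d"
  shows "cellw x q t l (n+2) c b * cellw x q t l (n+1) d a * t^(Qn c b d) * t^S' * stopw q t l (n+1) b a c d
       = cellw x q t l (n+2) c a * cellw x q t l (n+1) d b * t^(Qn c a d) * t^S * stopw q t l (n+1) a b c d"
    (is "?L = ?R")
proof -
  have "kind a b c d = 0 \<or> kind a b c d = 2" using k by auto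
  then consider (K0a) "kind a b c d = 0" "b = c" | (K0b) "kind a b c d = 0" "b \<noteq> c" | (K2) "kind a b c d = 2"
    by metis
  then show ?thesis
  proof cases
    case K0a
    define Q where "Q = Qn c a d"
    have ac: "a \<noteq> c" using K0a ab by auto
    have kk: "kind b a c d = 2" using K0a ab ad cd unfolding kind_def by auto
    have eq_q: "(if d > a then l else 0) + l * Q = (if c > a then l else 0) + (if d > c then l else 0)"
      using eqq1[OF ac ad cd] unfolding Q_def .
    have eq_t: "S' + (n+1) * Q = Q + S" using S K0a cd by (simp add: Qn_same Q_def)
    have "?L = x c * x d * Fc q t l (n+1) * Fc q t l (n+2) * (q^(if d > a then l else 0) * q^(l * Q)) * t^(S' + (n+1)*Q)"
      using K0a kk ac ad cd by (simp add: stopw_def cellw_eq cellw_ne Qn_same Q_def power_add power_mult power_mult_distrib mult_ac)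
    also have "\<dots> = x c * x d * Fc q t l (n+1) * Fc q t l (n+2) * (q^(if c > a then l else 0) * q^(if d > c then l else 0)) * t^(Q + S)"
      by (simp only: eq_t flip: power_add eq_q)
    also have "\<dots> = ?R"
      using K0a kk ac ad cd by (simp add: stopw_def cellw_eq cellw_ne Qn_same Q_def power_add mult_ac)
    finally show ?thesis .
  next
    case K0b
    have h: "{a,b} \<inter> {c,d} = {}" "Qn c a d = Qn c b d" using K0b unfolding kind_def by (auto split: if_splits)
    have kk: "kind b a c d = 0" using h unfolding kind_def by auto
    have eq_q: "(if c > b then l else 0) + (if d > a then l else 0) = (if c > a then l else (0::nat)) + (if d > b then l else 0)"
      using eqq2[of a c d b l] h ab cd by auto
    have eq_t: "S' = S" using S h by simp
    have "?L = x c * x d * Fc q t l (n+1) * Fc q t l (n+2) * (q^(if c > b then l else 0) * q^(if d > a then l else 0)) * t^(Qn c b d) * t^S'"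
      using K0b kk h by (simp add: stopw_def cellw_ne mult_ac)
    also have "\<dots> = x c * x d * Fc q t l (n+1) * Fc q t l (n+2) * (q^(if c > a then l else 0) * q^(if d > b then l else 0)) * t^(Qn c a d) * t^S"
      by (simp only: eq_t h(2) flip: power_add eq_q)
    also have "\<dots> = ?R"
      using K0b kk h by (simp add: stopw_def cellw_ne mult_ac)
    finally show ?thesis .
  next
    case K2
    define Q where "Q = Qn c b d"
    have h: "a = c" "b \<noteq> c" "b \<noteq> d" using K2 by (auto simp: kind_def split: if_splits)
    have kk: "kind b a c d = 0" using h unfolding kind_def by auto
    have eq_q: "(if c > b then l else 0) + (if d > c then l else 0) = (if d > b then l else 0) + l * Q"
      using eqq3[of b c d l] h cd unfolding Q_def by auto
    have eq_t: "Q + S' = S + (n+1) * Q" using S h cd by (simp add: Qn_same Q_def)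
    have "?L = x c * x d * Fc q t l (n+1) * Fc q t l (n+2) * (q^(if c > b then l else 0) * q^(if d > c then l else 0)) * t^(Q + S')"
      using K2 kk h cd by (simp add: stopw_def cellw_eq cellw_ne Q_def power_add mult_ac)
    also have "\<dots> = x c * x d * Fc q t l (n+1) * Fc q t l (n+2) * (q^(if d > b then l else 0) * q^(l * Q)) * t^(S + (n+1) * Q)"
      by (simp only: eq_t flip: power_add eq_q)
    also have "\<dots> = ?R"
      using K2 kk h cd by (simp add: stopw_def cellw_eq cellw_ne Qn_same Q_def power_add power_mult power_mult_distrib mult_ac)
    finally show ?thesis .
  qed
qed

definition ind :: "nat \<Rightarrow> nat \<Rightarrow> nat" where "ind u v = (if u < v then 1 else 0)"
lemma ind_sw: "u \<noteq> v \<Longrightarrow> ind u v + ind v u = 1" by (auto simp: ind_def)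
lemma Qn_ori: "x \<noteq> y \<Longrightarrow> y \<noteq> z \<Longrightarrow> x \<noteq> z \<Longrightarrow> Qn x y z + ind x y + ind y z + ind z x = 2"
  by (cases "x < y"; cases "y < z"; cases "x < z") (auto simp: Qn_def ind_def)
lemma perj0b: assumes "a\<noteq>c" "a\<noteq>d" "b\<noteq>c" "b \<noteq> d" "c\<noteq>d" "a \<noteq> b" "e \<noteq> a" "e \<noteq> b" "e \<noteq> c" "e \<noteq> d"
  shows "Qn c b e + Qn d a e + Qn c a d = Qn c a e + Qn d b e + Qn c b d"
proof -
  have "Qn c b e + ind c b + ind b e + ind e c = 2" "Qn d a e + ind d a + ind a e + ind e d = 2"
    "Qn c a d + ind c a + ind a d + ind d c = 2" "Qn c a e + ind c a + ind a e + ind e c = 2"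
    "Qn d b e + ind d b + ind b e + ind e d = 2" "Qn c b d + ind c b + ind b d + ind d c = 2"
    using assms by (auto intro!: Qn_ori)
  moreover have "ind d a + ind a d = 1" "ind d b + ind b d = 1" using assms by (auto simp: ind_def)
  ultimately show ?thesis by linarith
qed
lemma perj0a: "a\<noteq>c \<Longrightarrow> a\<noteq>d \<Longrightarrow> c\<noteq>d \<Longrightarrow> e \<noteq> a \<Longrightarrow> e \<noteq> c \<Longrightarrow> e \<noteq> d \<Longrightarrow>
   Qn c c e + Qn d a e + Qn c a d = Qn c a e + Qn d c e + Qn c c d"
  using Qn_ori[of d a e] Qn_ori[of c a d] Qn_ori[of c a e] Qn_ori[of d c e] Qn_same[of c e] Qn_same[of c d]
    ind_sw[of d a] ind_sw[of e c] by simp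
lemma perj2: "b\<noteq>c \<Longrightarrow> b \<noteq> d \<Longrightarrow> c\<noteq>d \<Longrightarrow> e \<noteq> b \<Longrightarrow> e \<noteq> c \<Longrightarrow> e \<noteq> d \<Longrightarrow>
   Qn c b e + Qn d c e + Qn c c d = Qn c c e + Qn d b e + Qn c b d"
  using Qn_ori[of c b e] Qn_ori[of d c e] Qn_ori[of d b e] Qn_ori[of c b d] Qn_same[of c e] Qn_same[of c d]
    ind_sw[of e c] ind_sw[of d b] by simp


definition Trip :: "nat list \<Rightarrow> (nat \<times> nat \<times> nat) set" where
  "Trip lam = {(r, j1, j2). (r, j1) \<in> dg lam \<and> (r, j2) \<in> dg lam \<and> j1 < j2}"

definition Qt :: "filling \<Rightarrow> nat \<times> nat \<times> nat \<Rightarrow> nat" where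
  "Qt \<rho> x = (case x of (r, j1, j2) \<Rightarrow> Qf (enat (\<rho> (r, j1))) (below \<rho> r j1) (enat (\<rho> (r, j2))))"

lemma Qf_le1: "Qf a b c \<le> 1" by (simp add: Qf_def)
lemma Qt_le1: "Qt \<rho> x \<le> 1" by (cases x) (simp add: Qt_def Qf_def)

lemma dg_sub: "dg lam \<subseteq> {1..sum_list lam} \<times> {1..length lam}"
proof
  fix u assume "u \<in> dg lam"
  then obtain r c where u: "u = (r,c)" "1 \<le> c" "c \<le> length lam" "1 \<le> r" "r \<le> colh lam c"
    by (auto simp: dg_def)
  have "lam ! (c - 1) \<in> set lam" using u by auto
  hence "colh lam c \<le> sum_list lam" unfolding colh_def by (rule member_le_sum_list) auto
  then show "u \<in> {1..sum_list lam} \<times> {1..length lam}" using u by auto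
qed

lemma finite_dg: "finite (dg lam)"
  by (rule finite_subset[OF dg_sub]) auto

lemma finite_Trip: "finite (Trip lam)"
proof -
  have "Trip lam \<subseteq> (\<lambda>(u, v). (fst u, snd u, snd v)) ` (dg lam \<times> dg lam)"
    unfolding Trip_def by (auto simp: image_iff) (metis fst_conv snd_conv)
  then show ?thesis by (rule finite_subset) (simp add: finite_dg)
qed

definition RowS :: "nat list \<Rightarrow> nat \<Rightarrow> nat set" where
  "RowS lam r = {c. (r, c) \<in> dg lam}"

lemma rowlen_card: "1 \<le> r \<Longrightarrow> rowlen lam r = card (RowS lam r)"
  unfolding rowlen_def RowS_def dg_def by (rule arg_cong[where f = card]) auto

lemma finite_RowS: "finite (RowS lam r)"
proof -
  have "RowS lam r \<subseteq> {1..length lam}" by (auto simp: RowS_def dg_def)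
  then show ?thesis by (rule finite_subset) auto
qed

lemma card_pairs:
  assumes "finite S"
  shows "card {(j1, j2). j1 \<in> S \<and> j2 \<in> S \<and> (j1::nat) < j2} = card S choose 2"
proof -
  let ?P = "{(j1, j2). j1 \<in> S \<and> j2 \<in> S \<and> (j1::nat) < j2}"
  have inj: "inj_on (\<lambda>(a, b). {a, b}) ?P"
    by (auto simp: inj_on_def doubleton_eq_iff)
  have img: "(\<lambda>(a, b). {a, b}) ` ?P = {B. B \<subseteq> S \<and> card B = 2}"
  proof
    show "(\<lambda>(a, b). {a, b}) ` ?P \<subseteq> {B. B \<subseteq> S \<and> card B = 2}" by auto
  next
    show "{B. B \<subseteq> S \<and> card B = 2} \<subseteq> (\<lambda>(a, b). {a, b}) ` ?P"
    proof
      fix B assume "B \<in> {B. B \<subseteq> S \<and> card B = 2}"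
      then obtain a b where B: "B = {a, b}" "a \<noteq> b" "B \<subseteq> S" by (auto simp: card_2_iff)
      show "B \<in> (\<lambda>(a, b). {a, b}) ` ?P"
      proof (cases "a < b")
        case True then show ?thesis using B by (auto simp: image_iff intro!: bexI[of _ "(a, b)"])
      next
        case False then have "b < a" using B by simp
        then show ?thesis using B by (auto simp: image_iff intro!: bexI[of _ "(b, a)"])
      qed
    qed
  qed
  have "card ?P = card {B. B \<subseteq> S \<and> card B = 2}" using card_image[OF inj] img by simp
  also have "\<dots> = card S choose 2" using n_subsets[OF assms] .
  finally show ?thesis .
qed

lemma nlam_card: "nlam lam = card (Trip lam)"
proof -
  let ?N = "sum_list lam"
  define TR where "TR r = (\<lambda>(a, b). (r, a, b)) ` {(j1, j2). j1 \<in> RowS lam r \<and> j2 \<in> RowS lam r \<and> j1 < j2}" for r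
  have T: "Trip lam = (\<Union>r\<in>{1..?N}. TR r)"
  proof
    show "Trip lam \<subseteq> (\<Union>r\<in>{1..?N}. TR r)"
    proof
      fix x assume x: "x \<in> Trip lam"
      then obtain r a b where xr: "x = (r, a, b)" "(r, a) \<in> dg lam" "(r, b) \<in> dg lam" "a < b"
        by (auto simp: Trip_def)
      then have "r \<in> {1..?N}" using dg_sub by blast
      then show "x \<in> (\<Union>r\<in>{1..?N}. TR r)" using xr by (auto simp: TR_def RowS_def image_iff)
    qed
  next
    show "(\<Union>r\<in>{1..?N}. TR r) \<subseteq> Trip lam" by (auto simp: TR_def RowS_def Trip_def)
  qed
  have fin: "finite (TR r)" for r
  proof -
    have "{(j1, j2). j1 \<in> RowS lam r \<and> j2 \<in> RowS lam r \<and> j1 < j2} \<subseteq> RowS lam r \<times> RowS lam r" by auto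
    then have "finite {(j1, j2). j1 \<in> RowS lam r \<and> j2 \<in> RowS lam r \<and> j1 < j2}"
      by (rule finite_subset) (simp add: finite_RowS)
    then show ?thesis unfolding TR_def by (rule finite_imageI)
  qed
  have cardTR: "card (TR r) = card (RowS lam r) choose 2" for r
    unfolding TR_def by (subst card_image) (auto simp: inj_on_def card_pairs finite_RowS)
  have "card (Trip lam) = (\<Sum>r\<in>{1..?N}. card (TR r))"
    unfolding T by (rule card_UN_disjoint) (simp, simp add: fin, auto simp: TR_def)
  also have "\<dots> = (\<Sum>r\<in>{1..?N}. rowlen lam r choose 2)"
    by (rule sum.cong) (auto simp: cardTR rowlen_card)
  finally show ?thesis by (simp add: nlam_def)
qed

lemma coinv_sum: "coinv lam \<rho> = (\<Sum>x\<in>Trip lam. Qt \<rho> x)"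
proof -
  have inv: "inv lam \<rho> = card {x \<in> Trip lam. Qt \<rho> x = 0}"
    unfolding inv_def Trip_def Qt_def by (rule arg_cong[where f = card]) auto
  have "card (Trip lam) = card {x \<in> Trip lam. Qt \<rho> x = 0} + card {x \<in> Trip lam. Qt \<rho> x \<noteq> 0}"
    using finite_Trip by (subst card_Un_disjoint[symmetric]) (auto intro: arg_cong[where f = card])
  moreover have "(\<Sum>x\<in>Trip lam. Qt \<rho> x) = card {x \<in> Trip lam. Qt \<rho> x \<noteq> 0}"
  proof -
    have "(\<Sum>x\<in>Trip lam. Qt \<rho> x) = (\<Sum>x\<in>Trip lam. if Qt \<rho> x \<noteq> 0 then 1 else 0)"
    proof (rule sum.cong)
      fix y show "Qt \<rho> y = (if Qt \<rho> y \<noteq> 0 then 1 else 0)" using Qt_le1[of \<rho> y] by auto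
    qed simp
    also have "\<dots> = card {x \<in> Trip lam. Qt \<rho> x \<noteq> 0}"
      using finite_Trip by (simp add: sum.inter_filter[symmetric])
    finally show ?thesis .
  qed
  ultimately show ?thesis unfolding coinv_def nlam_card inv by simp
qed

definition cw :: "nat list \<Rightarrow> (nat \<Rightarrow> 'a::field) \<Rightarrow> 'a \<Rightarrow> 'a \<Rightarrow> filling \<Rightarrow> nat \<times> nat \<Rightarrow> 'a" where
  "cw lam x q t \<rho> u = x (\<rho> u) *
     (if fst u \<ge> 2 \<and> \<rho> u > \<rho> (fst u - 1, snd u) then q ^ (leg lam u + 1) else 1) *
     (if fst u \<ge> 2 \<and> \<rho> u \<noteq> \<rho> (fst u - 1, snd u) then (1 - t) / (1 - q ^ (leg lam u + 1) * t ^ (arm lam u + 1)) else 1)"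

lemma wt_decomp: "wtHHL lam x q t \<rho> = (\<Prod>u\<in>dg lam. cw lam x q t \<rho> u) * t ^ (\<Sum>y\<in>Trip lam. Qt \<rho> y)"
proof -
  have m: "q ^ maj lam \<rho> = (\<Prod>u\<in>dg lam. if fst u \<ge> 2 \<and> \<rho> u > \<rho> (fst u - 1, snd u) then q ^ (leg lam u + 1) else 1)"
    unfolding maj_def power_sum by (rule prod.inter_filter[OF finite_dg])
  have f: "(\<Prod>u\<in>{u\<in>dg lam. fst u \<ge> 2 \<and> \<rho> u \<noteq> \<rho> (fst u - 1, snd u)}.
        (1 - t) / (1 - q ^ (leg lam u + 1) * t ^ (arm lam u + 1))) =
      (\<Prod>u\<in>dg lam. if fst u \<ge> 2 \<and> \<rho> u \<noteq> \<rho> (fst u - 1, snd u) then (1 - t) / (1 - q ^ (leg lam u + 1) * t ^ (arm lam u + 1)) else 1)"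
    by (rule prod.inter_filter[OF finite_dg])
  show ?thesis unfolding wtHHL_def m f coinv_sum cw_def prod.distrib by (simp add: mult_ac)
qed

lemma cw_row1: "fst u = 1 \<Longrightarrow> cw lam x q t \<rho> u = x (\<rho> u)" by (simp add: cw_def)
lemma cw_row2: "fst u \<ge> 2 \<Longrightarrow> cw lam x q t \<rho> u = cellw x q t (leg lam u + 1) (arm lam u + 1) (\<rho> u) (\<rho> (fst u - 1, snd u))"
  by (simp add: cw_def cellw_def Fc_def)



locale tsetup =
  fixes lam :: "nat list" and i :: nat
  assumes part: "is_partition lam" and i1: "1 \<le> i" and ilen: "i + 1 \<le> length lam"
    and heq: "colh lam i = colh lam (i+1)"
begin

abbreviation "L \<equiv> colh lam i"

lemma L_pos: "L \<ge> 1"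
proof -
  have "lam ! (i - 1) \<in> set lam" using i1 ilen by auto
  then show ?thesis using part unfolding is_partition_def colh_def by auto
qed

lemma colh_ge: assumes "1 \<le> c" "c \<le> i + 1" shows "colh lam c \<ge> L"
proof (cases "c = i + 1")
  case True then show ?thesis using heq by simp
next
  case False
  then have "c \<le> i" using assms by simp
  show ?thesis
  proof (cases "c = i")
    case False
    then have "c - 1 < i - 1" using \<open>c \<le> i\<close> assms by simp
    moreover have "i - 1 < length lam" using ilen by simp
    ultimately show ?thesis using part unfolding is_partition_def colh_def
      by (simp add: sorted_wrt_iff_nth_less)
  qed simp
qed

lemma cell_in: "1 \<le> s \<Longrightarrow> s \<le> L \<Longrightarrow> 1 \<le> c \<Longrightarrow> c \<le> i + 1 \<Longrightarrow> (s, c) \<in> dg lam"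
  using colh_ge[of c] ilen by (auto simp: dg_def)

lemma cell_i_le: "(s, c) \<in> dg lam \<Longrightarrow> c = i \<or> c = i + 1 \<Longrightarrow> s \<le> L"
  using heq by (auto simp: dg_def)

lemma leg_i: "leg lam (s, i) = L - s" "leg lam (s, i + 1) = L - s"
  using heq by (auto simp: leg_def)

definition Js :: "nat \<Rightarrow> nat set" where "Js s = {j. (s, j) \<in> dg lam \<and> i + 1 < j}"

lemma finite_Js: "finite (Js s)"
  by (rule finite_subset[OF _ finite_RowS[of lam s]]) (auto simp: Js_def RowS_def)

lemma RowS_split: assumes "1 \<le> s" "s \<le> L" shows "RowS lam s = {1..i+1} \<union> Js s"
proof
  show "RowS lam s \<subseteq> {1..i+1} \<union> Js s" by (auto simp: RowS_def Js_def dg_def)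
  show "{1..i+1} \<union> Js s \<subseteq> RowS lam s" using cell_in assms by (auto simp: RowS_def Js_def)
qed

lemma card_Js: assumes "1 \<le> s" "s \<le> L" shows "card (Js s) = arm lam (s, i + 1)"
proof -
  have "rowlen lam s = card ({1..i+1} \<union> Js s)" using rowlen_card RowS_split assms by simp
  also have "\<dots> = (i + 1) + card (Js s)"
    using finite_Js[of s] by (subst card_Un_disjoint) (auto simp: Js_def)
  finally show ?thesis unfolding arm_def by simp
qed

lemma arm_i: assumes "1 \<le> s" "s \<le> L" shows "arm lam (s, i) = arm lam (s, i + 1) + 1"
proof -
  have "rowlen lam s = card ({1..i+1} \<union> Js s)" using rowlen_card RowS_split assms by simp
  also have "\<dots> = (i + 1) + card (Js s)"
    using finite_Js[of s] by (subst card_Un_disjoint) (auto simp: Js_def)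
  finally show ?thesis unfolding arm_def by simp
qed

definition Sc :: "nat \<Rightarrow> (nat \<times> nat) set" where
  "Sc m = {(s, c). 1 \<le> s \<and> s \<le> m \<and> (c = i \<or> c = i + 1)}"

definition invol :: "nat \<times> nat \<times> nat \<Rightarrow> bool" where
  "invol x = (fst (snd x) = i \<or> fst (snd x) = i + 1 \<or> snd (snd x) = i \<or> snd (snd x) = i + 1)"

definition Rset :: "nat \<Rightarrow> (nat \<times> nat \<times> nat) set" where
  "Rset s = {x \<in> Trip lam. fst x = s \<and> invol x}"

definition Oset :: "nat \<Rightarrow> (nat \<times> nat \<times> nat) set" where
  "Oset s = Rset s - {(s, i, i + 1)}"

definition Sp :: "nat \<Rightarrow> (nat \<times> nat \<times> nat) set" where
  "Sp m = (\<Union>s\<in>{1..m}. Rset s)"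

lemma Sc_sub: "m \<le> L \<Longrightarrow> Sc m \<subseteq> dg lam"
  using cell_in i1 by (auto simp: Sc_def)

lemma prod_cells:
  fixes f :: "nat \<times> nat \<Rightarrow> 'a::comm_monoid_mult"
  assumes "m \<le> L"
  shows "(\<Prod>u\<in>dg lam. f u) = (\<Prod>u\<in>dg lam - Sc m. f u) * (\<Prod>s\<in>{1..m}. f (s, i) * f (s, i + 1))"
proof -
  have "(\<Prod>u\<in>dg lam. f u) = (\<Prod>u\<in>dg lam - Sc m. f u) * (\<Prod>u\<in>Sc m. f u)"
    using prod.subset_diff[OF Sc_sub[OF assms] finite_dg] .
  moreover have "Sc m = (\<lambda>s. (s, i)) ` {1..m} \<union> (\<lambda>s. (s, i + 1)) ` {1..m}"
    by (auto simp: Sc_def)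
  moreover have "(\<Prod>u\<in>(\<lambda>s. (s, i)) ` {1..m} \<union> (\<lambda>s. (s, i + 1)) ` {1..m}. f u)
      = (\<Prod>s\<in>{1..m}. f (s, i) * f (s, i + 1))"
    by (subst prod.union_disjoint) (auto simp: prod.reindex inj_on_def prod.distrib)
  ultimately show ?thesis by simp
qed

lemma finite_Rset: "finite (Rset s)"
  by (rule finite_subset[OF _ finite_Trip[of lam]]) (auto simp: Rset_def)

lemma Rset_sub: "Rset s \<subseteq> Trip lam" by (auto simp: Rset_def)

lemma sum_trip:
  fixes g :: "nat \<times> nat \<times> nat \<Rightarrow> nat"
  shows "(\<Sum>x\<in>Trip lam. g x) = (\<Sum>x\<in>Trip lam - Sp m. g x) + (\<Sum>s\<in>{1..m}. (\<Sum>x\<in>Rset s. g x))"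
proof -
  have sub: "Sp m \<subseteq> Trip lam" by (auto simp: Sp_def Rset_def)
  have "(\<Sum>x\<in>Trip lam. g x) = (\<Sum>x\<in>Trip lam - Sp m. g x) + (\<Sum>x\<in>Sp m. g x)"
    using sum.subset_diff[OF sub finite_Trip] .
  moreover have "(\<Sum>x\<in>Sp m. g x) = (\<Sum>s\<in>{1..m}. (\<Sum>x\<in>Rset s. g x))"
    unfolding Sp_def by (rule sum.UNION_disjoint) (simp, simp add: finite_Rset, auto simp: Rset_def)
  ultimately show ?thesis by simp
qed

lemma pair_in_Rset: "1 \<le> s \<Longrightarrow> s \<le> L \<Longrightarrow> (s, i, i + 1) \<in> Rset s"
  using cell_in i1 by (auto simp: Rset_def Trip_def invol_def)

lemma sum_Rset:
  fixes g :: "nat \<times> nat \<times> nat \<Rightarrow> nat"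
  shows "1 \<le> s \<Longrightarrow> s \<le> L \<Longrightarrow> (\<Sum>x\<in>Rset s. g x) = g (s, i, i + 1) + (\<Sum>x\<in>Oset s. g x)"
  unfolding Oset_def using pair_in_Rset finite_Rset by (simp add: sum.remove)

end



context tsetup begin

definition CC :: "(nat \<Rightarrow> 'a::field) \<Rightarrow> 'a \<Rightarrow> 'a \<Rightarrow> filling \<Rightarrow> nat \<Rightarrow> 'a" where
  "CC x q t \<rho> s = cw lam x q t \<rho> (s, i) * cw lam x q t \<rho> (s, i + 1)"

definition Row :: "(nat \<Rightarrow> 'a::field) \<Rightarrow> 'a \<Rightarrow> 'a \<Rightarrow> filling \<Rightarrow> nat \<Rightarrow> 'a" where
  "Row x q t \<rho> s = CC x q t \<rho> s * t ^ (Qt \<rho> (s, i, i + 1)) * t ^ (\<Sum>y\<in>Oset s. Qt \<rho> y)"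

lemma wt_rows:
  fixes x :: "nat \<Rightarrow> 'a::field"
  assumes "m \<le> L"
  shows "wtHHL lam x q t \<rho> = (\<Prod>u\<in>dg lam - Sc m. cw lam x q t \<rho> u) * t ^ (\<Sum>y\<in>Trip lam - Sp m. Qt \<rho> y)
      * (\<Prod>s\<in>{1..m}. Row x q t \<rho> s)"
proof -
  have "(\<Prod>s\<in>{1..m}. t ^ (\<Sum>y\<in>Rset s. Qt \<rho> y)) = (\<Prod>s\<in>{1..m}. t ^ (Qt \<rho> (s, i, i + 1)) * t ^ (\<Sum>y\<in>Oset s. Qt \<rho> y))"
    by (rule prod.cong) (use assms sum_Rset in \<open>auto simp: power_add\<close>)
  then show ?thesis
    unfolding wt_decomp prod_cells[OF assms] sum_trip[of _ m] power_add power_sum Row_def CC_def prod.distrib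
    by (simp add: mult_ac)
qed

end

locale tsetup2 = tsetup +
  fixes \<sigma> :: filling and k :: nat
  assumes tab: "\<sigma> \<in> Tab' lam" and k1: "1 \<le> k" and kL: "k \<le> L"
begin

abbreviation "\<sigma>' \<equiv> swp i (Suc 0) k \<sigma>"
abbreviation "m \<equiv> min (k + 1) L"

definition tc :: "nat \<Rightarrow> nat" where "tc c = (if c = i then i + 1 else if c = i + 1 then i else c)"

lemma tc_tc[simp]: "tc (tc c) = c" by (auto simp: tc_def)

lemma sw_in: "1 \<le> s \<Longrightarrow> s \<le> k \<Longrightarrow> \<sigma>' (s, c) = \<sigma> (s, tc c)"
  by (auto simp: swp_def tc_def)

lemma sw_out: "\<not> (1 \<le> s \<and> s \<le> k) \<or> (c \<noteq> i \<and> c \<noteq> i + 1) \<Longrightarrow> \<sigma>' (s, c) = \<sigma> (s, c)"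
  by (auto simp: swp_def)

lemma Qt_sw: "1 \<le> s \<Longrightarrow> s \<le> k \<Longrightarrow> Qt \<sigma>' (s, tc j1, tc j2) = Qt \<sigma> (s, j1, j2)"
  by (auto simp: Qt_def below_def sw_in)

lemma OO_eq: assumes "1 \<le> s" "s \<le> k" shows "(\<Sum>y\<in>Oset s. Qt \<sigma>' y) = (\<Sum>y\<in>Oset s. Qt \<sigma> y)"
proof -
  define \<phi> where "\<phi> y = (fst y, tc (fst (snd y)), tc (snd (snd y)))" for y :: "nat \<times> nat \<times> nat"
  have \<phi>\<phi>: "\<phi> (\<phi> y) = y" for y by (simp add: \<phi>_def)
  have into: "\<phi> y \<in> Oset s" if y: "y \<in> Oset s" for y
  proof -
    obtain j1 j2 where y0: "y = (s, j1, j2)" using y unfolding Oset_def Rset_def by (cases y) auto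
    have yy: "y = (s, j1, j2)" "(s, j1) \<in> dg lam" "(s, j2) \<in> dg lam" "j1 < j2" "invol y"
      "\<not> (j1 = i \<and> j2 = i + 1)"
      using y y0 by (auto simp: Oset_def Rset_def Trip_def)
    have sL: "s \<le> L" using yy cell_i_le unfolding invol_def by auto
    have dg1: "(s, tc j) \<in> dg lam" if "(s, j) \<in> dg lam" for j
      using that cell_in[OF assms(1) sL, of "tc j"] i1 by (auto simp: tc_def)
    have lt: "tc j1 < tc j2" using yy(4,6) by (auto simp: tc_def)
    have inv': "j1 = i \<or> j1 = i + 1 \<or> j2 = i \<or> j2 = i + 1" using yy(1,5) by (simp add: invol_def)
    have "(s, tc j1, tc j2) \<in> Oset s" using dg1[OF yy(2)] dg1[OF yy(3)] lt inv' yy(4,6)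
      unfolding Oset_def Rset_def Trip_def invol_def by (auto simp: tc_def)
    then show ?thesis by (simp add: \<phi>_def yy(1))
  qed
  have bij: "bij_betw \<phi> (Oset s) (Oset s)"
    by (rule bij_betw_byWitness[of _ \<phi>]) (use \<phi>\<phi> into in auto)
  have "(\<Sum>y\<in>Oset s. Qt \<sigma> y) = (\<Sum>y\<in>Oset s. Qt \<sigma>' (\<phi> y))"
  proof (rule sum.cong)
    fix y assume "y \<in> Oset s"
    then obtain j1 j2 where "y = (s, j1, j2)" unfolding Oset_def Rset_def by (cases y) auto
    then show "Qt \<sigma> y = Qt \<sigma>' (\<phi> y)" using Qt_sw[OF assms] by (simp add: \<phi>_def)
  qed simp
  also have "\<dots> = (\<Sum>y\<in>Oset s. Qt \<sigma>' y)" by (rule sum.reindex_bij_betw[OF bij])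
  finally show ?thesis by simp
qed

lemma rest_cells: assumes "u \<in> dg lam - Sc m" shows "cw lam x q t \<sigma>' u = cw lam x q t \<sigma> u"
proof -
  obtain s c where u: "u = (s, c)" "(s, c) \<in> dg lam" "(s, c) \<notin> Sc m" using assms by (cases u) auto
  have s1: "1 \<le> s" using u by (auto simp: dg_def)
  have "\<sigma>' (s, c) = \<sigma> (s, c) \<and> \<sigma>' (s - 1, c) = \<sigma> (s - 1, c)"
  proof (cases "c = i \<or> c = i + 1")
    case True
    then have "s \<le> L" using cell_i_le u by auto
    then have "s > k + 1" using u True s1 by (auto simp: Sc_def)
    then show ?thesis by (auto intro!: sw_out)
  next
    case False then show ?thesis by (auto intro!: sw_out)
  qed
  then show ?thesis using u by (simp add: cw_def)
qed

lemma rest_trip: assumes "y \<in> Trip lam - Sp m" shows "Qt \<sigma>' y = Qt \<sigma> y"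
proof -
  obtain s j1 j2 where y: "y = (s, j1, j2)" "(s, j1) \<in> dg lam" "(s, j2) \<in> dg lam" "y \<notin> Sp m"
    using assms by (auto simp: Trip_def)
  have s1: "1 \<le> s" using y by (auto simp: dg_def)
  show ?thesis
  proof (cases "invol y")
    case True
    then have "s \<le> L" using cell_i_le y unfolding invol_def by auto
    moreover have "\<not> s \<le> m" using True y s1 assms by (auto simp: Sp_def Rset_def)
    ultimately have "s > k + 1" by auto
    then have "\<sigma>' (s, j1) = \<sigma> (s, j1)" "\<sigma>' (s, j2) = \<sigma> (s, j2)" "\<sigma>' (s - 1, j1) = \<sigma> (s - 1, j1)"
      by (auto intro!: sw_out)
    then show ?thesis using y by (simp add: Qt_def below_def)
  next
    case False
    then have "j1 \<noteq> i" "j1 \<noteq> i + 1" "j2 \<noteq> i" "j2 \<noteq> i + 1" using y by (auto simp: invol_def)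
    then show ?thesis using y by (simp add: Qt_def below_def sw_out)
  qed
qed

end



lemma perj:
  assumes k: "kind a b c d \<in> {0,2}" and ab: "a \<noteq> b" and cd: "c \<noteq> d" and ad: "a \<noteq> d"
    and e: "e \<noteq> a" "e \<noteq> b" "e \<noteq> c" "e \<noteq> d"
  shows "Qn c b e + Qn d a e + Qn c a d = Qn c a e + Qn d b e + Qn c b d"
proof -
  have "kind a b c d = 0 \<or> kind a b c d = 2" using k by auto
  then consider (K0a) "kind a b c d = 0" "b = c" | (K0b) "kind a b c d = 0" "b \<noteq> c" | (K2) "kind a b c d = 2"
    by metis
  then show ?thesis
  proof cases
    case K0a then show ?thesis using perj0a[of a c d e] ab ad cd e by simp
  next
    case K0b
    then have "{a,b} \<inter> {c,d} = {}" unfolding kind_def by (auto split: if_splits)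
    then show ?thesis using perj0b[of a c d b e] ab ad cd e by auto
  next
    case K2
    then have h: "a = c" "b \<noteq> c" "b \<noteq> d" by (auto simp: kind_def split: if_splits)
    then show ?thesis using perj2[of b c d e] cd e by simp
  qed
qed

lemma Vd_facts: "Vd i n r \<rho> k \<Longrightarrow> r \<le> k \<and> k \<le> r + n \<and>
   (\<forall>s. r \<le> s \<and> s < k \<longrightarrow> kind (\<rho>(s,i)) (\<rho>(s,i+1)) (\<rho>(s+1,i)) (\<rho>(s+1,i+1)) \<in> {1,2}) \<and>
   (k < r + n \<longrightarrow> kind (\<rho>(k,i)) (\<rho>(k,i+1)) (\<rho>(k+1,i)) (\<rho>(k+1,i+1)) \<in> {0,2})"
proof (induction n arbitrary: r)
  case 0 then show ?case by simp
next
  case (Suc n)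
  show ?case
  proof (cases "k = r")
    case True then show ?thesis using Suc.prems by simp
  next
    case False
    then have h: "kind (\<rho>(r,i)) (\<rho>(r,i+1)) (\<rho>(r+1,i)) (\<rho>(r+1,i+1)) \<in> {1,2}" "Vd i n (r+1) \<rho> k"
      using Suc.prems by auto
    from Suc.IH[OF h(2)] have IH: "r + 1 \<le> k" "k \<le> r + 1 + n"
      "\<forall>s. r + 1 \<le> s \<and> s < k \<longrightarrow> kind (\<rho>(s,i)) (\<rho>(s,i+1)) (\<rho>(s+1,i)) (\<rho>(s+1,i+1)) \<in> {1,2}"
      "k < r + 1 + n \<longrightarrow> kind (\<rho>(k,i)) (\<rho>(k,i+1)) (\<rho>(k+1,i)) (\<rho>(k+1,i+1)) \<in> {0,2}"
      by auto
    have "\<forall>s. r \<le> s \<and> s < k \<longrightarrow> kind (\<rho>(s,i)) (\<rho>(s,i+1)) (\<rho>(s+1,i)) (\<rho>(s+1,i+1)) \<in> {1,2}"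
    proof (intro allI impI)
      fix s assume s: "r \<le> s \<and> s < k"
      show "kind (\<rho>(s,i)) (\<rho>(s,i+1)) (\<rho>(s+1,i)) (\<rho>(s+1,i+1)) \<in> {1,2}"
      proof (cases "s = r")
        case True then show ?thesis using h(1) by simp
      next
        case False then show ?thesis using IH(3) s by simp
      qed
    qed
    then show ?thesis using IH(1,2,4) by simp

  qed
qed

context tsetup2 begin

lemma tab_row: "(r, c1) \<in> dg lam \<Longrightarrow> (r, c2) \<in> dg lam \<Longrightarrow> c1 \<noteq> c2 \<Longrightarrow> \<sigma> (r, c1) \<noteq> \<sigma> (r, c2)"
  using tab by (auto simp: Tab'_def)

lemma tab_att: "(r, c1) \<in> dg lam \<Longrightarrow> (r + 1, c2) \<in> dg lam \<Longrightarrow> c1 < c2 \<Longrightarrow> \<sigma> (r, c1) \<noteq> \<sigma> (r + 1, c2)"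
  using tab by (auto simp: Tab'_def)

lemma cell: "1 \<le> s \<Longrightarrow> s \<le> L \<Longrightarrow> (s, i) \<in> dg lam \<and> (s, i + 1) \<in> dg lam"
  using cell_in i1 by auto

lemma R1:
  fixes x :: "nat \<Rightarrow> 'a::field"
  assumes desc: "\<sigma> (1, i) > \<sigma> (1, i + 1)"
  shows "Row x q t \<sigma>' 1 = t * Row x q t \<sigma> 1"
proof -
  have cc: "CC x q t \<sigma>' 1 = CC x q t \<sigma> 1"
    using k1 by (simp add: CC_def cw_row1 sw_in tc_def)
  have p1: "Qt \<sigma>' (1, i, i + 1) = 1" using k1 desc by (simp add: Qt_def below_def sw_in tc_def Qf_def)
  have p0: "Qt \<sigma> (1, i, i + 1) = 0" using desc by (simp add: Qt_def below_def Qf_def)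
  have oo: "(\<Sum>y\<in>Oset 1. Qt \<sigma>' y) = (\<Sum>y\<in>Oset 1. Qt \<sigma> y)" using OO_eq k1 by simp
  show ?thesis unfolding Row_def cc p1 p0 oo by (simp add: mult_ac)
qed

lemma R2:
  fixes x :: "nat \<Rightarrow> 'a::field" and q t :: 'a
  assumes gen: "\<forall>a b. a > 0 \<longrightarrow> q ^ a * t ^ b \<noteq> 1"
    and r: "1 \<le> r" "r < k"
    and kd: "kind (\<sigma>(r,i)) (\<sigma>(r,i+1)) (\<sigma>(r+1,i)) (\<sigma>(r+1,i+1)) \<in> {1,2}"
  shows "Row x q t \<sigma>' (r + 1) * contw q t (L - r) (arm lam (r+1, i+1) + 1) (\<sigma>'(r,i)) (\<sigma>'(r,i+1)) (\<sigma>'(r+1,i)) (\<sigma>'(r+1,i+1))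
       = Row x q t \<sigma> (r + 1) * contw q t (L - r) (arm lam (r+1, i+1) + 1) (\<sigma>(r,i)) (\<sigma>(r,i+1)) (\<sigma>(r+1,i)) (\<sigma>(r+1,i+1))"
proof -
  define a where "a = \<sigma>(r,i)"
  define b where "b = \<sigma>(r,i+1)"
  define c where "c = \<sigma>(r+1,i)"
  define d where "d = \<sigma>(r+1,i+1)"
  note abcd_def = a_def b_def c_def d_def
  define A where "A = arm lam (r+1, i+1) + 1"
  have rL: "r + 1 \<le> L" using r kL by simp
  have lg: "leg lam (r+1, i) + 1 = L - r" "leg lam (r+1, i+1) + 1 = L - r" using leg_i rL by auto
  have ar: "arm lam (r+1, i) + 1 = A + 1" using arm_i[of "r+1"] rL by (simp add: A_def)
  have s': "\<sigma>'(r,i) = b" "\<sigma>'(r,i+1) = a" "\<sigma>'(r+1,i) = d" "\<sigma>'(r+1,i+1) = c"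
    using r by (simp_all add: sw_in tc_def abcd_def)
  have ab: "a \<noteq> b" using tab_row cell[of r] r rL unfolding abcd_def by auto
  have cd: "c \<noteq> d" using tab_row cell[of "r+1"] rL unfolding abcd_def by auto
  have ad: "a \<noteq> d" using tab_att cell[of r] cell[of "r+1"] r rL unfolding abcd_def by auto
  have cc': "CC x q t \<sigma>' (r+1) = cellw x q t (L - r) (A + 1) d b * cellw x q t (L - r) A c a"
    unfolding CC_def using s' r lg ar by (simp add: cw_row2 A_def)
  have cc: "CC x q t \<sigma> (r+1) = cellw x q t (L - r) (A + 1) c a * cellw x q t (L - r) A d b"
    unfolding CC_def using lg ar r by (simp add: cw_row2 A_def abcd_def)
  have p': "Qt \<sigma>' (r+1, i, i+1) = Qn d b c" using s' r by (simp add: Qt_def below_def)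
  have p: "Qt \<sigma> (r+1, i, i+1) = Qn c a d" using r by (simp add: Qt_def below_def abcd_def)
  have oo: "(\<Sum>y\<in>Oset (r+1). Qt \<sigma>' y) = (\<Sum>y\<in>Oset (r+1). Qt \<sigma> y)" using OO_eq r by simp
  have l0: "L - r > 0" using rL by simp
  have loc: "cellw x q t (L - r) (A+1) d b * cellw x q t (L - r) A c a * t^(Qn d b c) * contw q t (L - r) A b a d c
       = cellw x q t (L - r) (A+1) c a * cellw x q t (L - r) A d b * t^(Qn c a d) * contw q t (L - r) A a b c d"
    by (rule cont_local[OF gen l0]) (use kd ab cd ad abcd_def in auto)
  show ?thesis unfolding Row_def cc' cc p' p oo s' A_def[symmetric] abcd_def[symmetric]
    using loc by (simp add: mult_ac)
qed

lemma R3: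
  fixes x :: "nat \<Rightarrow> 'a::field" and q t :: 'a
  assumes kL': "k < L"
    and kd: "kind (\<sigma>(k,i)) (\<sigma>(k,i+1)) (\<sigma>(k+1,i)) (\<sigma>(k+1,i+1)) \<in> {0,2}"
  shows "Row x q t \<sigma>' (k + 1) * stopw q t (L - k) (arm lam (k+1, i+1) + 1) (\<sigma>'(k,i)) (\<sigma>'(k,i+1)) (\<sigma>'(k+1,i)) (\<sigma>'(k+1,i+1))
       = Row x q t \<sigma> (k + 1) * stopw q t (L - k) (arm lam (k+1, i+1) + 1) (\<sigma>(k,i)) (\<sigma>(k,i+1)) (\<sigma>(k+1,i)) (\<sigma>(k+1,i+1))"
proof -
  define a where "a = \<sigma>(k,i)"
  define b where "b = \<sigma>(k,i+1)"
  define c where "c = \<sigma>(k+1,i)"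
  define d where "d = \<sigma>(k+1,i+1)"
  note abcd_def = a_def b_def c_def d_def
  define n where "n = arm lam (k+1, i+1)"
  define s where "s = k + 1"
  have s1: "1 \<le> s" "s \<le> L" using kL' by (auto simp: s_def)
  have lg: "leg lam (k+1, i) + 1 = L - k" "leg lam (k+1, i+1) + 1 = L - k" using leg_i kL' by auto
  have ar: "arm lam (k+1, i) + 1 = n + 2" using arm_i[of "k+1"] kL' by (simp add: n_def)
  have s': "\<sigma>'(k,i) = b" "\<sigma>'(k,i+1) = a" "\<sigma>'(k+1,i) = c" "\<sigma>'(k+1,i+1) = d"
    using k1 by (simp_all add: sw_in sw_out tc_def abcd_def)
  have ab: "a \<noteq> b" using tab_row cell[of k] k1 kL unfolding abcd_def by auto
  have cd: "c \<noteq> d" using tab_row cell[of "k+1"] kL' unfolding abcd_def by auto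
  have ad: "a \<noteq> d" using tab_att cell[of k] cell[of "k+1"] k1 kL kL' unfolding abcd_def by auto
  have cc': "CC x q t \<sigma>' (k+1) = cellw x q t (L - k) (n + 2) c b * cellw x q t (L - k) (n + 1) d a"
    unfolding CC_def using s' k1 lg ar by (simp add: cw_row2 n_def)
  have cc: "CC x q t \<sigma> (k+1) = cellw x q t (L - k) (n + 2) c a * cellw x q t (L - k) (n + 1) d b"
    unfolding CC_def using lg ar k1 by (simp add: cw_row2 n_def abcd_def)
  have p': "Qt \<sigma>' (k+1, i, i+1) = Qn c b d" using s' k1 by (simp add: Qt_def below_def)
  have p: "Qt \<sigma> (k+1, i, i+1) = Qn c a d" using k1 by (simp add: Qt_def below_def abcd_def)
  define B where "B = (\<lambda>j. (s, i, j)) ` Js s \<union> (\<lambda>j. (s, i + 1, j)) ` Js s"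
  have BO: "B \<subseteq> Oset s"
    using cell[OF s1] by (auto simp: B_def Oset_def Rset_def Trip_def Js_def invol_def)
  have finO: "finite (Oset s)" using finite_Rset by (simp add: Oset_def)
  have sumB: "(\<Sum>y\<in>B. g y) = (\<Sum>j\<in>Js s. g (s, i, j) + g (s, i + 1, j))" for g :: "nat \<times> nat \<times> nat \<Rightarrow> nat"
    unfolding B_def
    by (subst sum.union_disjoint) (auto simp: finite_Js sum.reindex inj_on_def sum.distrib)
  have restO: "Qt \<sigma>' y = Qt \<sigma> y" if y: "y \<in> Oset s - B" for y
  proof -
    obtain j1 j2 where y0: "y = (s, j1, j2)" using y unfolding Oset_def Rset_def by (cases y) auto
    have yy: "(s, j1) \<in> dg lam" "(s, j2) \<in> dg lam" "j1 < j2" "\<not> (j1 = i \<and> j2 = i + 1)"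
      using y y0 by (auto simp: Oset_def Rset_def Trip_def)
    have "j1 \<noteq> i \<and> j1 \<noteq> i + 1"
    proof
      show "j1 \<noteq> i"
      proof
        assume "j1 = i"
        then have "j2 \<in> Js s" using yy by (auto simp: Js_def)
        then show False using y y0 \<open>j1 = i\<close> by (auto simp: B_def)
      qed
      show "j1 \<noteq> i + 1"
      proof
        assume "j1 = i + 1"
        then have "j2 \<in> Js s" using yy by (auto simp: Js_def)
        then show False using y y0 \<open>j1 = i + 1\<close> by (auto simp: B_def)
      qed
    qed
    then have "\<sigma>' (s, j1) = \<sigma> (s, j1)" "\<sigma>' (s, j2) = \<sigma> (s, j2)" "\<sigma>' (s - 1, j1) = \<sigma> (s - 1, j1)"
      by (auto simp: s_def intro!: sw_out)
    then show ?thesis using y0 by (simp add: Qt_def below_def)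
  qed
  have OOsplit: "(\<Sum>y\<in>Oset s. Qt \<rho> y) = (\<Sum>y\<in>Oset s - B. Qt \<rho> y) + (\<Sum>j\<in>Js s. Qt \<rho> (s, i, j) + Qt \<rho> (s, i + 1, j))" for \<rho>
    using sum.subset_diff[OF BO finO, of "Qt \<rho>"] sumB[of "Qt \<rho>"] by simp
  have perjs: "(Qt \<sigma>' (s, i, j) + Qt \<sigma>' (s, i + 1, j)) + Qn c a d = (Qt \<sigma> (s, i, j) + Qt \<sigma> (s, i + 1, j)) + Qn c b d"
    if j: "j \<in> Js s" for j
  proof -
    define e where "e = \<sigma> (s, j)"
    have jj: "(s, j) \<in> dg lam" "i + 1 < j" using j by (auto simp: Js_def)
    have e: "e \<noteq> a" "e \<noteq> b" "e \<noteq> c" "e \<noteq> d"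
      using tab_att[of k i j] tab_att[of k "i+1" j] tab_row[of s i j] tab_row[of s "i+1" j] cell[of k] cell[OF s1] jj k1 kL
      unfolding abcd_def e_def s_def by auto
    have "\<sigma>' (s, j) = e" using jj by (simp add: e_def s_def sw_out)
    then have q1: "Qt \<sigma>' (s, i, j) = Qn c b e" "Qt \<sigma>' (s, i + 1, j) = Qn d a e"
      using s' k1 by (simp_all add: Qt_def below_def s_def)
    have q2: "Qt \<sigma> (s, i, j) = Qn c a e" "Qt \<sigma> (s, i + 1, j) = Qn d b e"
      using k1 by (simp_all add: Qt_def below_def s_def abcd_def e_def)
    show ?thesis unfolding q1 q2 using perj[OF _ ab cd ad e] kd unfolding abcd_def by simp
  qed
  have cardJ: "card (Js s) = n" using card_Js[OF s1] by (simp add: n_def s_def)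
  have OO: "(\<Sum>y\<in>Oset s. Qt \<sigma>' y) + n * Qn c a d = (\<Sum>y\<in>Oset s. Qt \<sigma> y) + n * Qn c b d"
  proof -
    have "(\<Sum>j\<in>Js s. (Qt \<sigma>' (s, i, j) + Qt \<sigma>' (s, i + 1, j)) + Qn c a d)
        = (\<Sum>j\<in>Js s. (Qt \<sigma> (s, i, j) + Qt \<sigma> (s, i + 1, j)) + Qn c b d)"
      by (rule sum.cong) (use perjs in auto)
    then have "(\<Sum>j\<in>Js s. Qt \<sigma>' (s, i, j) + Qt \<sigma>' (s, i + 1, j)) + n * Qn c a d
        = (\<Sum>j\<in>Js s. Qt \<sigma> (s, i, j) + Qt \<sigma> (s, i + 1, j)) + n * Qn c b d"
      by (simp add: sum.distrib cardJ)
    moreover have "(\<Sum>y\<in>Oset s - B. Qt \<sigma>' y) = (\<Sum>y\<in>Oset s - B. Qt \<sigma> y)"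
      by (rule sum.cong) (use restO in auto)
    ultimately show ?thesis unfolding OOsplit by simp
  qed
  have loc: "cellw x q t (L - k) (n+2) c b * cellw x q t (L - k) (n+1) d a * t^(Qn c b d) * t^(\<Sum>y\<in>Oset s. Qt \<sigma>' y) * stopw q t (L - k) (n+1) b a c d
       = cellw x q t (L - k) (n+2) c a * cellw x q t (L - k) (n+1) d b * t^(Qn c a d) * t^(\<Sum>y\<in>Oset s. Qt \<sigma> y) * stopw q t (L - k) (n+1) a b c d"
    by (rule stop_local[OF _ ab cd ad OO]) (use kd abcd_def in auto)
  show ?thesis unfolding Row_def cc' cc p' p s' n_def[symmetric] abcd_def[symmetric]
    using loc by (simp add: mult_ac s_def)
qed

end



context tsetup2 begin

lemma claim:
  fixes x :: "nat \<Rightarrow> 'a::field" and q t :: 'a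
  assumes gen: "\<forall>a b. a > 0 \<longrightarrow> q ^ a * t ^ b \<noteq> 1"
    and kc: "\<forall>s. 1 \<le> s \<and> s < k \<longrightarrow> kind (\<sigma>(s,i)) (\<sigma>(s,i+1)) (\<sigma>(s+1,i)) (\<sigma>(s+1,i+1)) \<in> {1,2}"
    and ks: "k < L \<longrightarrow> kind (\<sigma>(k,i)) (\<sigma>(k,i+1)) (\<sigma>(k+1,i)) (\<sigma>(k+1,i+1)) \<in> {0,2}"
  shows "1 \<le> r \<Longrightarrow> r \<le> k \<Longrightarrow> (\<Prod>s\<in>{r+1..m}. Row x q t \<sigma>' s) * Wd lam q t i (L - r) r \<sigma>' k
        = (\<Prod>s\<in>{r+1..m}. Row x q t \<sigma> s) * Wd lam q t i (L - r) r \<sigma> k"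
proof (induction "k - r" arbitrary: r)
  case 0
  then have rk: "r = k" by simp
  show ?case
  proof (cases "k = L")
    case True
    then show ?thesis using rk by simp
  next
    case False
    then have kL': "k < L" using kL by simp
    then obtain n where n: "L - k = Suc n" by (metis Suc_diff_Suc)
    have m: "m = k + 1" using kL' by simp
    have W: "Wd lam q t i (L - k) k \<rho> k = stopw q t (L - k) (arm lam (k+1, i+1) + 1) (\<rho>(k,i)) (\<rho>(k,i+1)) (\<rho>(k+1,i)) (\<rho>(k+1,i+1))" for \<rho>
      unfolding n by simp
    show ?thesis unfolding rk m W using R3[OF kL'] ks kL' by simp
  qed
next
  case (Suc d)
  then have rk: "r < k" by simp
  then obtain n where n: "L - r = Suc n" using kL by (metis Suc_diff_Suc less_le_trans)
  have n': "n = L - (r + 1)" using n by simp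
  have W: "Wd lam q t i (L - r) r \<rho> k = contw q t (L - r) (arm lam (r+1, i+1) + 1) (\<rho>(r,i)) (\<rho>(r,i+1)) (\<rho>(r+1,i)) (\<rho>(r+1,i+1))
        * Wd lam q t i (L - (r + 1)) (r + 1) \<rho> k" for \<rho>
    unfolding n using rk by (simp add: n')
  have rm: "r + 1 \<le> m" using rk kL by simp
  have P: "(\<Prod>s\<in>{r+1..m}. g s) = g (r + 1) * (\<Prod>s\<in>{r+2..m}. g s)" for g :: "nat \<Rightarrow> 'a"
    using prod.atLeast_Suc_atMost[OF rm, of g] by simp
  have IH: "(\<Prod>s\<in>{r+2..m}. Row x q t \<sigma>' s) * Wd lam q t i (L - (r+1)) (r+1) \<sigma>' k
        = (\<Prod>s\<in>{r+2..m}. Row x q t \<sigma> s) * Wd lam q t i (L - (r+1)) (r+1) \<sigma> k"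
    using Suc.hyps(1)[of "r+1"] Suc.hyps(2) Suc.prems rk by (simp add: numeral_2_eq_2)
  have loc: "Row x q t \<sigma>' (r + 1) * contw q t (L - r) (arm lam (r+1, i+1) + 1) (\<sigma>'(r,i)) (\<sigma>'(r,i+1)) (\<sigma>'(r+1,i)) (\<sigma>'(r+1,i+1))
       = Row x q t \<sigma> (r + 1) * contw q t (L - r) (arm lam (r+1, i+1) + 1) (\<sigma>(r,i)) (\<sigma>(r,i+1)) (\<sigma>(r+1,i)) (\<sigma>(r+1,i+1))"
    using R2[OF gen Suc.prems(1) rk] kc Suc.prems(1) rk by simp
  have "(\<Prod>s\<in>{r+1..m}. Row x q t \<sigma>' s) * Wd lam q t i (L - r) r \<sigma>' k
      = (Row x q t \<sigma>' (r + 1) * contw q t (L - r) (arm lam (r+1, i+1) + 1) (\<sigma>'(r,i)) (\<sigma>'(r,i+1)) (\<sigma>'(r+1,i)) (\<sigma>'(r+1,i+1)))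
        * ((\<Prod>s\<in>{r+2..m}. Row x q t \<sigma>' s) * Wd lam q t i (L - (r+1)) (r+1) \<sigma>' k)"
    unfolding P W by (simp add: mult_ac)
  also have "\<dots> = (Row x q t \<sigma> (r + 1) * contw q t (L - r) (arm lam (r+1, i+1) + 1) (\<sigma>(r,i)) (\<sigma>(r,i+1)) (\<sigma>(r+1,i)) (\<sigma>(r+1,i+1)))
        * ((\<Prod>s\<in>{r+2..m}. Row x q t \<sigma> s) * Wd lam q t i (L - (r+1)) (r+1) \<sigma> k)"
    unfolding loc IH ..
  also have "\<dots> = (\<Prod>s\<in>{r+1..m}. Row x q t \<sigma> s) * Wd lam q t i (L - r) r \<sigma> k"
    unfolding P W by (simp add: mult_ac)
  finally show ?case .
qed

lemma main_identity:
  fixes x :: "nat \<Rightarrow> 'a::field" and q t :: 'a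
  assumes gen: "\<forall>a b. a > 0 \<longrightarrow> q ^ a * t ^ b \<noteq> 1"
    and kc: "\<forall>s. 1 \<le> s \<and> s < k \<longrightarrow> kind (\<sigma>(s,i)) (\<sigma>(s,i+1)) (\<sigma>(s+1,i)) (\<sigma>(s+1,i+1)) \<in> {1,2}"
    and ks: "k < L \<longrightarrow> kind (\<sigma>(k,i)) (\<sigma>(k,i+1)) (\<sigma>(k+1,i)) (\<sigma>(k+1,i+1)) \<in> {0,2}"
    and desc: "\<sigma> (1, i) > \<sigma> (1, i + 1)"
  shows "wtHHL lam x q t \<sigma>' * Wd lam q t i (L - 1) 1 \<sigma>' k = t * (wtHHL lam x q t \<sigma> * Wd lam q t i (L - 1) 1 \<sigma> k)"
proof -
  have mL: "m \<le> L" by simp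
  have m1: "1 \<le> m" using k1 L_pos by simp
  have P: "(\<Prod>s\<in>{1..m}. g s) = g 1 * (\<Prod>s\<in>{2..m}. g s)" for g :: "nat \<Rightarrow> 'a"
    using prod.atLeast_Suc_atMost[OF m1, of g] by (simp add: numeral_2_eq_2)
  have rc: "(\<Prod>u\<in>dg lam - Sc m. cw lam x q t \<sigma>' u) = (\<Prod>u\<in>dg lam - Sc m. cw lam x q t \<sigma> u)"
    by (intro prod.cong refl rest_cells)
  have rt: "(\<Sum>y\<in>Trip lam - Sp m. Qt \<sigma>' y) = (\<Sum>y\<in>Trip lam - Sp m. Qt \<sigma> y)"
    by (intro sum.cong refl rest_trip)
  have cl: "(\<Prod>s\<in>{2..m}. Row x q t \<sigma>' s) * Wd lam q t i (L - 1) 1 \<sigma>' k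
        = (\<Prod>s\<in>{2..m}. Row x q t \<sigma> s) * Wd lam q t i (L - 1) 1 \<sigma> k"
    using claim[OF gen kc ks, of 1 x] k1 by (simp add: numeral_2_eq_2)
  show ?thesis
    unfolding wt_rows[OF mL, of x q t \<sigma>'] wt_rows[OF mL, of x q t \<sigma>] P rc rt R1[OF desc]
    using cl by (simp add: mult_ac)
qed

end



lemma swp_invol: "swp i r k (swp i r k \<rho>) = \<rho>"
  by (auto simp: swp_def fun_eq_iff)

lemma Bot_nth: "j < length lam \<Longrightarrow> Bot lam \<rho> ! j = \<rho> (1, j + 1)"
  by (simp add: Bot_def del: upt_Suc)

lemma Bot_len: "length (Bot lam \<rho>) = length lam"
  by (simp add: Bot_def del: upt_Suc)

theorem mainTheorem7:
  fixes lam :: "nat list" and i :: nat and \<sigma> \<sigma>' :: filling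
    and q t :: "'a::field" and x :: "nat \<Rightarrow> 'a"
  assumes "is_partition lam"
    and "1 \<le> i" and "i + 1 \<le> length lam"
    and "colh lam i = colh lam (i + 1)"
    and "\<sigma> \<in> Tab' lam"
    and "Bot lam \<sigma> ! (i - 1) > Bot lam \<sigma> ! i"
    and "\<sigma>' \<in> outcomes lam q t i \<sigma>"
    and generic: "\<forall>a b. a > 0 \<longrightarrow> q ^ a * t ^ b \<noteq> 1"
  shows "Bot lam \<sigma>' = sact i (Bot lam \<sigma>) \<and>
         wtHHL lam x q t \<sigma>' * prob lam q t i \<sigma>' \<sigma> = t * wtHHL lam x q t \<sigma> * prob lam q t i \<sigma> \<sigma>'"
proof -
  interpret T: tsetup lam i using assms(1-4) by unfold_locales
  let ?L = "colh lam i"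
  from assms(7) obtain p where p: "p \<in> set (tauR lam q t i (?L - 1) 1 \<sigma>)" "\<sigma>' = fst p"
    by (auto simp: outcomes_def tau_def)
  from set_tauR[OF p(1) assms(2)] obtain k where k: "1 \<le> k" "k \<le> 1 + (?L - 1)"
    "fst p = swp i 1 k \<sigma>" "Vd i (?L - 1) 1 \<sigma> k" by blast
  have kL: "k \<le> ?L" using k T.L_pos by simp
  interpret S: tsetup2 lam i \<sigma> k using assms(5) k(1) kL by unfold_locales
  have s': "\<sigma>' = swp i (Suc 0) k \<sigma>" using p k by simp
  note VF = Vd_facts[OF k(4)]
  have kc: "\<forall>s. 1 \<le> s \<and> s < k \<longrightarrow> kind (\<sigma>(s,i)) (\<sigma>(s,i+1)) (\<sigma>(s+1,i)) (\<sigma>(s+1,i+1)) \<in> {1,2}"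
    using VF by simp
  have ks: "k < ?L \<longrightarrow> kind (\<sigma>(k,i)) (\<sigma>(k,i+1)) (\<sigma>(k+1,i)) (\<sigma>(k+1,i+1)) \<in> {0,2}"
    using VF T.L_pos by simp
  have desc: "\<sigma> (1, i) > \<sigma> (1, i + 1)"
    using assms(6) assms(2,3) Bot_nth[of i lam \<sigma>] Bot_nth[of "i - 1" lam \<sigma>] by simp
  have D: "\<forall>s. 1 \<le> s \<and> s \<le> 1 + (?L - 1) \<longrightarrow> \<sigma> (s, i) \<noteq> \<sigma> (s, i + 1)"
    using S.tab_row S.cell T.L_pos by auto
  have D': "\<forall>s. 1 \<le> s \<and> s \<le> 1 + (?L - 1) \<longrightarrow> \<sigma>' (s, i) \<noteq> \<sigma>' (s, i + 1)"
    using D unfolding s' by (auto simp: swp_def)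
  have prob1: "prob lam q t i \<sigma> \<sigma>' = Wd lam q t i (?L - 1) 1 \<sigma> k"
    unfolding prob_def tau_def p(2) k(3) using tauR_filter[OF assms(2) k(1) k(2) D] .
  have bk: "\<sigma> = swp i 1 k \<sigma>'" using s' swp_invol by simp
  have prob2: "prob lam q t i \<sigma>' \<sigma> = Wd lam q t i (?L - 1) 1 \<sigma>' k"
    unfolding prob_def tau_def using tauR_filter[OF assms(2) k(1) k(2) D'] bk by simp
  have id: "wtHHL lam x q t \<sigma>' * Wd lam q t i (?L - 1) 1 \<sigma>' k = t * (wtHHL lam x q t \<sigma> * Wd lam q t i (?L - 1) 1 \<sigma> k)"
    using S.main_identity[OF generic kc ks desc] unfolding s' .
  have bot: "Bot lam \<sigma>' = sact i (Bot lam \<sigma>)"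
  proof (rule nth_equalityI)
    show "length (Bot lam \<sigma>') = length (sact i (Bot lam \<sigma>))" by (simp add: Bot_len sact_def)
  next
    fix j assume "j < length (Bot lam \<sigma>')"
    then have j: "j < length lam" by (simp add: Bot_len)
    have "Bot lam \<sigma>' ! j = \<sigma>' (1, j + 1)" using j by (simp add: Bot_nth)
    also have "\<dots> = (if j + 1 = i then \<sigma> (1, i + 1) else if j + 1 = i + 1 then \<sigma> (1, i) else \<sigma> (1, j + 1))"
      unfolding s' using k(1) by (simp add: swp_def)
    also have "\<dots> = sact i (Bot lam \<sigma>) ! j"
      using j assms(2,3) by (auto simp: sact_def Bot_len Bot_nth nth_list_update)
    finally show "Bot lam \<sigma>' ! j = sact i (Bot lam \<sigma>) ! j" .
  qed
  show ?thesis using bot id prob1 prob2 by (simp add: mult_ac)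
qed


end
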